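(* Let $\gamma\in\mathbb{R}\setminus\{0,1\}$, $\epsilon\in\mathbb{R}$, and set $\nu=\frac{\gamma-2}{\gamma-1}$, assumed not to be an integer. Let $\mathfrak g$ be a real Lie algebra and let $L\in\mathfrak g$ and $a_k,b_k\in\mathfrak g$ ($k=0,1,2,\dots$) satisfy: (a) $k\,\frac{\gamma-1}{\gamma}\,b_k+[a_{k-1},L]=0$ for all $k\ge1$; (b) the identity \[ \frac{\gamma-1}{\gamma}\sum_{k\ge1}k\,a_k\,z^{k-1+\nu}=\epsilon L+\sum_{k\ge0}[L,b_k]\,z^{k}, \] understood as an identity of formal sums of real powers of $z$ with $\mathfrak g$-valued coefficients (coefficients of each exponent compared separately); (c) $\sum_{k=1}^{N}[a_{k-1},b_{N-k}]=0$ for all $N\ge1$. Then \[ [a_0,b_0]=[a_0,b_1]=[L,b_1]=0,\qquad [b_0,b_1]=\epsilon b_1,\qquad [b_0,L]=\epsilon L,\qquad [a_0,L]=\frac{1}{\nu-2}\,b_1 . \] In particular, for $\epsilon\neq0$ these are the relations of the Lie algebra $\mathcal L$, and for $\epsilon=0$ they reduce to $[a_0,b_0]=[a_0,b_1]=[L,b_1]=[b_0,b_1]=[b_0,L]=0$, $[a_0,L]=\frac{1}{\nu-2}b_1$ (the Lie algebra $\mathcal L'$).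
   Context: These conditions arise from the prolongation equations $\frac{\gamma-1}{\gamma}P_z+[M,L]=0$, $\frac{\gamma-1}{\gamma}z^{\frac{\gamma-2}{\gamma-1}}M_z=\epsilon L+[L,P]$, $[M,P]=0$ for the equation $u_{tt}+\epsilon u_t=[(1+u/\gamma)^{\gamma-1}]_{xx}$, with $z=(1+u/\gamma)^{\gamma-1}$ and the ansatz $M=\sum_{k\ge0}a_k z^k$, $P=\sum_{k\ge0}b_k z^k$, where $L,a_k,b_k$ are (e.g.) vector fields in the pseudopotential variables. *)

theory Defs
  imports Complex_Main
begin

definition lie_algebra :: "('a::real_vector \<Rightarrow> 'a \<Rightarrow> 'a) \<Rightarrow> bool" where
  "lie_algebra br \<longleftrightarrow>
     (\<forall>x y z. br (x + y) z = br x z + br y z) \<and>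
     (\<forall>x y z. br x (y + z) = br x y + br x z) \<and>
     (\<forall>c x y. br (c *\<^sub>R x) y = c *\<^sub>R br x y) \<and>
     (\<forall>c x y. br x (c *\<^sub>R y) = c *\<^sub>R br x y) \<and>
     (\<forall>x. br x x = 0) \<and>
     (\<forall>x y z. br x (br y z) + br y (br z x) + br z (br x y) = 0)"

text \<open>A formal sum \<open>\<Sum>k\<in>I. c k z^(e k)\<close> of real powers of \<open>z\<close> is represented by
  its coefficient function: the coefficient of \<open>z^r\<close> is the sum of all \<open>c k\<close>
  with \<open>k \<in> I\<close> and \<open>e k = r\<close>.\<close>
definition formal_coeff :: "nat set \<Rightarrow> (nat \<Rightarrow> real) \<Rightarrow> (nat \<Rightarrow> 'a::real_vector) \<Rightarrow> real \<Rightarrow> 'a" where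
  "formal_coeff I e c r = (\<Sum>k\<in>{k\<in>I. e k = r}. c k)"

end

theory Submission
  imports Defs
begin

lemma lie_facts:
  assumes "lie_algebra br"
  shows "br x 0 = 0" "br 0 x = 0" "br y x = - br x y"
    "br x (c *\<^sub>R y) = c *\<^sub>R br x y" "br (c *\<^sub>R x) y = c *\<^sub>R br x y"
    "br x (br y z) + br y (br z x) + br z (br x y) = 0"
    "br x (- y) = - br x y"
proof -
  have l1: "\<And>x y z. br (x + y) z = br x z + br y z" and l2: "\<And>x y z. br x (y + z) = br x y + br x z"
    and l3: "\<And>c x y. br (c *\<^sub>R x) y = c *\<^sub>R br x y" and l4: "\<And>c x y. br x (c *\<^sub>R y) = c *\<^sub>R br x y"
    and l5: "\<And>x. br x x = 0" and l6: "\<And>x y z. br x (br y z) + br y (br z x) + br z (br x y) = 0"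
    using assms unfolding lie_algebra_def by auto
  show "br x 0 = 0" using l4[of x 0 0] by simp
  show "br 0 x = 0" using l3[of 0 0 x] by simp
  have "0 = br (x + y) (x + y)" using l5 by simp
  also have "\<dots> = br x y + br y x" using l1[of x y "x+y"] l2[of x x y] l2[of y x y] l5[of x] l5[of y] by simp
  finally show "br y x = - br x y" by (simp add: eq_neg_iff_add_eq_0 add.commute)
  show "br x (c *\<^sub>R y) = c *\<^sub>R br x y" by (rule l4)
  show "br (c *\<^sub>R x) y = c *\<^sub>R br x y" by (rule l3)
  show "br x (br y z) + br y (br z x) + br z (br x y) = 0" by (rule l6)
  show "br x (- y) = - br x y" using l4[of x "-1" y] by simp
qed

theorem proposition4:
  fixes br :: "'g::real_vector \<Rightarrow> 'g \<Rightarrow> 'g"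
    and \<gamma> \<epsilon> \<nu> :: real
    and L :: 'g and a b :: "nat \<Rightarrow> 'g"
  assumes lie: "lie_algebra br"
    and g0: "\<gamma> \<noteq> 0" and g1: "\<gamma> \<noteq> 1"
    and nu: "\<nu> = (\<gamma> - 2) / (\<gamma> - 1)"
    and nu_nonint: "\<nu> \<notin> \<int>"
    and A: "\<And>k. k \<ge> 1 \<Longrightarrow>
              (real k * ((\<gamma> - 1) / \<gamma>)) *\<^sub>R b k + br (a (k - 1)) L = 0"
    and B: "\<And>r::real.
              ((\<gamma> - 1) / \<gamma>) *\<^sub>R
                formal_coeff {1..} (\<lambda>k. real k - 1 + \<nu>) (\<lambda>k. real k *\<^sub>R a k) r
              = (if r = 0 then \<epsilon> *\<^sub>R L else 0)
                + formal_coeff UNIV (\<lambda>k. real k) (\<lambda>k. br L (b k)) r"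
    and C: "\<And>N. N \<ge> 1 \<Longrightarrow> (\<Sum>k=1..N. br (a (k - 1)) (b (N - k))) = 0"
  shows "br (a 0) (b 0) = 0 \<and> br (a 0) (b 1) = 0 \<and> br L (b 1) = 0 \<and>
         br (b 0) (b 1) = \<epsilon> *\<^sub>R b 1 \<and> br (b 0) L = \<epsilon> *\<^sub>R L \<and>
         br (a 0) L = (1 / (\<nu> - 2)) *\<^sub>R b 1"
proof -
  note lf = lie_facts[OF lie]
  define c where "c = (\<gamma> - 1) / \<gamma>"
  have c0: "c \<noteq> 0" using g0 g1 by (simp add: c_def)
  have int: "\<And>n::nat. \<And>m::nat. real m - 1 + \<nu> \<noteq> real n"
  proof
    fix n m :: nat assume "real m - 1 + \<nu> = real n"
    hence "\<nu> = of_int (int n - int m + 1)" by simp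
    thus False using nu_nonint by (metis Ints_of_int)
  qed
  have Lb: "(if n = 0 then \<epsilon> *\<^sub>R L else 0) + br L (b n) = 0" for n :: nat
  proof -
    have s1: "{k\<in>{1..}. real k - 1 + \<nu> = real n} = {}" using int by auto
    have s2: "{k\<in>UNIV. real k = real n} = {n}" by auto
    show ?thesis using B[of "real n"] unfolding formal_coeff_def s1 s2 by simp
  qed
  have Lb0: "br L (b 0) = - \<epsilon> *\<^sub>R L" using Lb[of 0] by (simp add: eq_neg_iff_add_eq_0 add.commute)
  have Lb1: "br L (b 1) = 0" using Lb[of 1] by simp
  have a1: "a 1 = 0"
  proof -
    have s1: "{k\<in>{1..}. real k - 1 + \<nu> = real (1::nat) - 1 + \<nu>} = {1}" by auto
    have nk: "real k \<noteq> \<nu>" for k :: nat using int[where n=k and m=1] by simp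
    have s2: "{k\<in>UNIV. real k = real (1::nat) - 1 + \<nu>} = {}" using nk by simp
    have "c *\<^sub>R a 1 = 0" using B[of "real (1::nat) - 1 + \<nu>"] unfolding formal_coeff_def s1 s2 c_def
      using nk[of 0] by simp
    thus ?thesis using c0 by simp
  qed
  have A1: "c *\<^sub>R b 1 + br (a 0) L = 0" using A[of 1] by (simp add: c_def)
  have a0L: "br (a 0) L = - c *\<^sub>R b 1" using A1 by (simp add: eq_neg_iff_add_eq_0 add.commute)
  have C1: "br (a 0) (b 0) = 0" using C[of 1] by simp
  have C2: "br (a 0) (b 1) = 0"
  proof -
    have "{1..2::nat} = {1,2}" by auto
    thus ?thesis using C[of 2] a1 lf(2) by simp
  qed
  have nu2: "1 / (\<nu> - 2) = - c"
  proof -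
    have "\<gamma> - 1 \<noteq> 0" using g1 by simp
    hence "\<nu> - 2 = - \<gamma> / (\<gamma> - 1)" unfolding nu by (simp add: field_simps)
    thus ?thesis using g0 g1 by (simp add: c_def)
  qed
  have b0L: "br (b 0) L = \<epsilon> *\<^sub>R L" using lf(3)[of L "b 0"] Lb0 by simp
  have jac: "br (b 0) (br (a 0) L) + br (a 0) (br L (b 0)) + br L (br (b 0) (a 0)) = 0" by (rule lf(6))
  have b0a0: "br (b 0) (a 0) = 0" using lf(3)[of "a 0" "b 0"] C1 by simp
  have "br (b 0) (br (a 0) L) = \<epsilon> *\<^sub>R br (a 0) L"
  proof -
    have e1: "br (b 0) (br (a 0) L) + br (a 0) (- (\<epsilon> *\<^sub>R L)) = 0"
      using jac b0a0 Lb0 lf(1)[of L] by simp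
    have e2: "br (a 0) (- (\<epsilon> *\<^sub>R L)) = - (\<epsilon> *\<^sub>R br (a 0) L)"
      using lf(7) lf(4) by simp
    show ?thesis using e1 e2 by (simp add: algebra_simps)
  qed
  hence "(- c) *\<^sub>R br (b 0) (b 1) = (- c) *\<^sub>R (\<epsilon> *\<^sub>R b 1)"
    unfolding a0L lf(4) by simp
  hence eqc: "(- c) *\<^sub>R br (b 0) (b 1) = (- c) *\<^sub>R (\<epsilon> *\<^sub>R b 1)" .
  have b0b1: "br (b 0) (b 1) = \<epsilon> *\<^sub>R b 1" proof -
    have "br (b 0) (b 1) = \<epsilon> *\<^sub>R b 1 \<or> - c = 0" using iffD1[OF scaleR_cancel_left eqc] .
    thus ?thesis using c0 by auto
  qed
  show ?thesis using C1 C2 Lb1 b0b1 b0L a0L nu2 by simp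
qed

end
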